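(* Let $\mathcal{X}$ be a state space and let $C:\mathcal{X}\to U$ be the ground-truth meta-state mapping of a Meta-Causal Graph $\{\mathcal{G}_u\}_{u\in U}$ on variables $X=\{X_i\}_{i\in[p]}$, whose causal skeleton matrices $M_u\in\{0,1\}^{p\times p}$ satisfy $M_u\neq M_{u'}$ for all $u\neq u'$. Assume the Mixed Data Structure Learning assumption stated in the context. Let $\hat C:\mathcal{X}\to\hat U$, with $|\hat U|=|U|$, be the learned mapping. Then $\hat C$ is swap-label equivalent to $C$, i.e. there is a bijection $g:U\to\hat U$ with $\hat C(x)=g(C(x))$ for all $x\in\mathcal{X}$.
   Context: A Meta-Causal Graph consists of a finite set $U$ of meta states, for each $u\in U$ a DAG $\mathcal{G}_u$ on vertex set $[p]=\{1,\dots,p\}$ with causal skeleton matrix $M_u$ ($M_u[i,j]=1$ iff $i$ is a parent of $j$ in $\mathcal{G}_u$), and a ground-truth mapping $C:\mathcal{X}\to U$ assigning each state $x$ its active meta state; the skeleton matrices of distinct meta states are distinct. Each sample $x$ is generated from the causal subgraph $\mathcal{G}_{C(x)}$. Mixed Data Structure Learning assumption: for any dataset $\mathcal{D}$ whose samples are generated from the subgraphs indexed by a set $S_{\mathcal{D}}\subseteq U$, learning a single causal graph $\hat{\mathcal{G}}$ from $\mathcal{D}$ (treating all samples as coming from one graph) yields $\mathrm{Pa}_{\hat{\mathcal{G}}}(X_j)=\bigcup_{u\in S_{\mathcal{D}}}\mathrm{Pa}_{\mathcal{G}_u}(X_j)$ for all $j\in[p]$; equivalently the learned skeleton is the entrywise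 OR of the $M_u$, $u\in S_{\mathcal D}$. Learned mapping: for a candidate mapping $\hat C:\mathcal{X}\to\hat U$, for each $\hat u\in\hat U$ a skeleton matrix $\hat M_{\hat u}$ is learned from the pooled samples $\{x:\hat C(x)=\hat u\}$ (so by the assumption $\hat M_{\hat u}[i,j]=\max_{x:\hat C(x)=\hat u}M_{C(x)}[i,j]$), and the learned mapping is one selected by the learning procedure as minimizing the expected structural complexity $\mathbb{E}_{x}\big[\|\hat M_{\hat C(x)}\|_1\big]$ (number of edges) over such mappings. Two mappings $C_1:\mathcal{X}\to U_1$, $C_2:\mathcal{X}\to U_2$ are swap-label equivalent if there is a permutation (bijection) $g:U_1\to U_2$ with $C_2(x)=g(C_1(x))$ for all $x\in\mathcal{X}$. *)

theory Defs
  imports "HOL-Probability.Probability"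
begin

text \<open>A causal skeleton matrix on vertex set [p] = {1..p} is a 0/1 matrix, represented as a
  predicate A with A i j = True iff i is a parent of j.\<close>
definition dag_skeleton :: "nat \<Rightarrow> (nat \<Rightarrow> nat \<Rightarrow> bool) \<Rightarrow> bool" where
  "dag_skeleton p A \<longleftrightarrow>
     (\<forall>i j. A i j \<longrightarrow> i \<in> {1..p} \<and> j \<in> {1..p}) \<and> acyclic {(i, j). A i j}"

text \<open>Number of edges, i.e. the entrywise 1-norm of the skeleton matrix.\<close>
definition n_edges :: "nat \<Rightarrow> (nat \<Rightarrow> nat \<Rightarrow> bool) \<Rightarrow> nat" where
  "n_edges p A = card {(i, j). i \<in> {1..p} \<and> j \<in> {1..p} \<and> A i j}"

text \<open>Skeleton learned (under the Mixed Data Structure Learning assumption) from the pooled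
  samples assigned to candidate meta state v by the candidate mapping Ch: entrywise OR (max)
  of the true skeletons M (C x) over all states x with Ch x = v.\<close>
definition learned_skeleton ::
  "('u \<Rightarrow> nat \<Rightarrow> nat \<Rightarrow> bool) \<Rightarrow> ('x \<Rightarrow> 'u) \<Rightarrow> ('x \<Rightarrow> 'v) \<Rightarrow> 'v \<Rightarrow> nat \<Rightarrow> nat \<Rightarrow> bool" where
  "learned_skeleton M C Ch v i j \<longleftrightarrow> (\<exists>x. Ch x = v \<and> M (C x) i j)"

definition struct_complexity ::
  "nat \<Rightarrow> 'x pmf \<Rightarrow> ('u \<Rightarrow> nat \<Rightarrow> nat \<Rightarrow> bool) \<Rightarrow> ('x \<Rightarrow> 'u) \<Rightarrow> ('x \<Rightarrow> 'v) \<Rightarrow> real" where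
  "struct_complexity p D M C Ch =
     measure_pmf.expectation D (\<lambda>x. real (n_edges p (learned_skeleton M C Ch (Ch x))))"

end

theory Submission
  imports Defs
begin

theorem theorem1:
  fixes p :: nat
    and D :: "'x pmf"
    and U :: "'u set"
    and M :: "'u \<Rightarrow> nat \<Rightarrow> nat \<Rightarrow> bool"
    and C :: "'x \<Rightarrow> 'u"
    and Uh :: "'v set"
    and Ch :: "'x \<Rightarrow> 'v"
  assumes "finite U"
    and "\<forall>u\<in>U. dag_skeleton p (M u)"
    and "inj_on M U"
    and "range C = U"
    and "set_pmf D = UNIV"
    and "finite Uh"
    and "card Uh = card U"
    and "range Ch \<subseteq> Uh"
    and "\<forall>C'. range C' \<subseteq> Uh \<longrightarrow> struct_complexity p D M C Ch \<le> struct_complexity p D M C C'"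
  shows "\<exists>g. bij_betw g U Uh \<and> (\<forall>x. Ch x = g (C x))"
proof -
  note A = assms
  have out: "M (C y) i j \<Longrightarrow> i \<in> {1..p} \<and> j \<in> {1..p}" for y i j
    using A(2) A(4) unfolding dag_skeleton_def by blast
  obtain g0 where g0: "bij_betw g0 U Uh"
    using finite_same_card_bij[OF A(1) A(6)] A(7) by metis
  define C' where "C' = g0 \<circ> C"
  have rC': "range C' \<subseteq> Uh" using g0 A(4) unfolding C'_def bij_betw_def by auto
  have lC': "learned_skeleton M C C' (C' x) = M (C x)" for x
  proof (intro ext)
    fix i j
    have "g0 (C y) = g0 (C x) \<longleftrightarrow> C y = C x" for y
      using g0 A(4) unfolding bij_betw_def inj_on_def by auto
    then show "learned_skeleton M C C' (C' x) i j = M (C x) i j"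
      unfolding learned_skeleton_def C'_def by auto
  qed
  define a where "a x = real (n_edges p (learned_skeleton M C Ch (Ch x)))" for x
  define b where "b x = real (n_edges p (M (C x)))" for x
  have fin: "finite {(i, j). i \<in> {1..p} \<and> j \<in> {1..p} \<and> Q i j}" for Q :: "nat \<Rightarrow> nat \<Rightarrow> bool"
    by (rule finite_subset[of _ "{1..p} \<times> {1..p}"]) auto
  have bnd: "n_edges p Q \<le> card ({1..p} \<times> {1..p})" for Q
    unfolding n_edges_def by (rule card_mono) auto
  have sub: "{(i, j). i \<in> {1..p} \<and> j \<in> {1..p} \<and> M (C x) i j}
     \<subseteq> {(i, j). i \<in> {1..p} \<and> j \<in> {1..p} \<and> learned_skeleton M C Ch (Ch x) i j}" for x
    unfolding learned_skeleton_def by auto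
  have ba: "b x \<le> a x" for x
    unfolding a_def b_def n_edges_def using card_mono[OF fin sub] by simp
  have ia: "integrable (measure_pmf D) a"
    by (rule measure_pmf.integrable_const_bound[where B="real (card ({1..p} \<times> {1..p}))"])
      (use bnd in \<open>auto simp: a_def simp del: of_nat_mult intro!: AE_I2\<close>)
  have ib: "integrable (measure_pmf D) b"
    by (rule measure_pmf.integrable_const_bound[where B="real (card ({1..p} \<times> {1..p}))"])
      (use bnd in \<open>auto simp: b_def simp del: of_nat_mult intro!: AE_I2\<close>)
  have "measure_pmf.expectation D a \<le> measure_pmf.expectation D b"
  proof -
    have "struct_complexity p D M C Ch \<le> struct_complexity p D M C C'" using A(9) rC' by blast
    then show ?thesis unfolding struct_complexity_def a_def b_def lC' .
  qed
  moreover have "measure_pmf.expectation D b \<le> measure_pmf.expectation D a"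
    by (rule integral_mono[OF ib ia]) (use ba in auto)
  ultimately have "measure_pmf.expectation D (\<lambda>x. a x - b x) = 0"
    using ia ib by (simp add: Bochner_Integration.integral_diff)
  then have "AE x in measure_pmf D. a x - b x = 0"
    using measure_pmf.integral_nonneg_eq_0_iff_AE_banach[of D "\<lambda>x. a x - b x"] ia ib ba
    by auto
  then have ab: "a x = b x" for x
    using A(5) by (auto simp: AE_measure_pmf_iff)
  have lS: "learned_skeleton M C Ch (Ch x) = M (C x)" for x
  proof (intro ext)
    fix i j
    have "card {(i, j). i \<in> {1..p} \<and> j \<in> {1..p} \<and> M (C x) i j}
      = card {(i, j). i \<in> {1..p} \<and> j \<in> {1..p} \<and> learned_skeleton M C Ch (Ch x) i j}"
      using ab[of x] unfolding a_def b_def n_edges_def by simp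
    then have eq: "{(i, j). i \<in> {1..p} \<and> j \<in> {1..p} \<and> M (C x) i j}
      = {(i, j). i \<in> {1..p} \<and> j \<in> {1..p} \<and> learned_skeleton M C Ch (Ch x) i j}"
      using card_subset_eq[OF fin sub] by simp
    show "learned_skeleton M C Ch (Ch x) i j = M (C x) i j"
    proof (cases "i \<in> {1..p} \<and> j \<in> {1..p}")
      case True
      then show ?thesis using eq by blast
    next
      case False
      then show ?thesis using out unfolding learned_skeleton_def by blast
    qed
  qed
  have bkw: "Ch x = Ch y \<Longrightarrow> C x = C y" for x y
    using lS[of x] lS[of y] A(3) A(4) unfolding inj_on_def by (metis rangeI)
  define f where "f v = C (SOME x. Ch x = v)" for v
  have fCh: "f (Ch x) = C x" for x
    proof -
    have "Ch (SOME y. Ch y = Ch x) = Ch x" by (rule someI) (rule refl)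
    then show ?thesis unfolding f_def by (rule bkw)
  qed
  have fim: "f ` range Ch = U"
    using A(4) fCh by (auto simp: image_iff)
  have finR: "finite (range Ch)" using A(6) A(8) finite_subset by blast
  have c1: "card U \<le> card (range Ch)" using fim card_image_le[OF finR, of f] by simp
  have c2: "card (range Ch) \<le> card Uh" using card_mono[OF A(6) A(8)] .
  have injf: "inj_on f (range Ch)"
    by (rule eq_card_imp_inj_on[OF finR]) (use fim c1 c2 A(7) in simp)
  have fwd: "C x = C y \<Longrightarrow> Ch x = Ch y" for x y
    using injf fCh unfolding inj_on_def by (metis rangeI)
  have rCh: "range Ch = Uh" using card_subset_eq[OF A(6) A(8)] c1 c2 A(7) by simp
  define g where "g u = Ch (SOME x. C x = u)" for u
  have gC: "Ch x = g (C x)" for x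
    proof -
    have "C (SOME y. C y = C x) = C x" by (rule someI) (rule refl)
    then show ?thesis unfolding g_def by (rule fwd[symmetric])
  qed
  have "bij_betw g U Uh"
    unfolding bij_betw_def
  proof
    show "inj_on g U"
      unfolding inj_on_def using A(4) gC bkw by (metis imageE)
    show "g ` U = Uh"
      using rCh A(4) gC by (auto simp: image_iff)
  qed
  then show ?thesis using gC by blast
qed

end
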